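(* Suppose the rows of $\tilde{\mathbf Z}^\star$ can be represented in a $d_0$-dimensional Fourier basis, i.e. $\mathbf F^\star$ has at most $d_0$ nonzero columns. Then $d=\operatorname{rank}(\mathbf R^\star)\le 2d_0$, and there exists $\tilde{\mathbf W}\in\mathbb O_T$ such that $$\begin{bmatrix}\operatorname{ASE}(\mathbf R^\star,d) & \mathbf 0\end{bmatrix}=\frac1{\sqrt T}\mathbf F^\star\mathbf K^{1/2}\tilde{\mathbf W},$$ where $\mathbf 0$ is the $n\times(T-d)$ zero matrix.
   Context: Let $\mathbf Z^\star\in\mathbb R^{n\times T}$ have rows $\mathbf Z^\star_i$ with $\sigma^{\star2}_i=\frac1T\|\mathbf M\mathbf Z^\star_i\|^2>0$, where $\mathbf M=\mathbf I-\frac1T\mathbf J$ is the centering projection ($\mathbf J$ all-ones). Let $\boldsymbol\Sigma^\star=\operatorname{diag}(\sigma^{\star2}_1,\dots,\sigma^{\star2}_n)$, $\tilde{\mathbf Z}^\star=\frac1{\sqrt T}(\boldsymbol\Sigma^\star)^{-1/2}\mathbf Z^\star\mathbf M$, and $\mathbf R^\star=\tilde{\mathbf Z}^\star\tilde{\mathbf Z}^{\star\top}$ (the correlation matrix of the rows of $\mathbf Z^\star$). Let $\mathbf F^\star\in\mathbb C^{n\times T}$ have entries $F^\star_{i,k}=\sum_{t=1}^T\tilde Z^\star_{i,t}\exp\{-2\pi\mathrm i(k-1)(t-1)/T\}$. Let $\mathbf K\in\mathbb R^{T\times T}$ be the permutation matrix with $K_{s,t}=1$ if $s=t=1$ or $s+t=T+2$,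 and $0$ otherwise; with $\mathbf P_\pm$ the orthogonal projections onto its $\pm1$ eigenspaces, $\mathbf K^{1/2}=\mathbf P_++\mathrm i\,\mathbf P_-$. For a symmetric $\mathbf A\in\mathbb R^{n\times n}$, $\operatorname{ASE}(\mathbf A,d)=\mathbf V|\mathbf D|^{1/2}$, where $\mathbf D$ is the diagonal matrix of the $d$ largest-magnitude eigenvalues of $\mathbf A$ and $\mathbf V\in\mathbb R^{n\times d}$ holds corresponding orthonormal eigenvectors. $\mathbb O_T$ denotes the $T\times T$ orthogonal matrices. *)

theory Defs
  imports Complex_Main "Jordan_Normal_Form.Matrix" "Jordan_Normal_Form.DL_Rank"
begin

(* Convention: all matrices are 0-indexed (Jordan_Normal_Form 'mat');
   the paper's index k (resp. t, s) corresponds to k-1 here. *)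

definition centering :: "nat \<Rightarrow> real mat" where
  "centering T = 1\<^sub>m T - (1 / real T) \<cdot>\<^sub>m mat T T (\<lambda>_. 1)"

definition sigma2 :: "real mat \<Rightarrow> nat \<Rightarrow> real" where
  "sigma2 Z i = (let T = dim_col Z; c = centering T *\<^sub>v row Z i
                 in (1 / real T) * (\<Sum>t<T. (c $ t)^2))"

definition Sigma_inv_sqrt :: "real mat \<Rightarrow> real mat" where
  "Sigma_inv_sqrt Z = mat (dim_row Z) (dim_row Z)
     (\<lambda>(i,j). if i = j then 1 / sqrt (sigma2 Z i) else 0)"

definition Ztilde :: "real mat \<Rightarrow> real mat" where
  "Ztilde Z = (1 / sqrt (real (dim_col Z))) \<cdot>\<^sub>m
     (Sigma_inv_sqrt Z * Z * centering (dim_col Z))"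

definition corr_mat :: "real mat \<Rightarrow> real mat" where
  "corr_mat Z = Ztilde Z * (Ztilde Z)\<^sup>T"

definition fourier_mat :: "real mat \<Rightarrow> complex mat" where
  "fourier_mat Z = (let T = dim_col Z in
     mat (dim_row Z) T (\<lambda>(i,k). \<Sum>t<T. complex_of_real (Ztilde Z $$ (i,t)) *
        exp (- (2 * of_real pi * \<i> * of_nat k * of_nat t / of_nat T))))"

definition Kmat :: "nat \<Rightarrow> real mat" where
  "Kmat T = mat T T (\<lambda>(s,t). if (s = 0 \<and> t = 0) \<or> s + t = T then 1 else 0)"

text \<open>Orthogonal projections onto the +1 / -1 eigenspaces of the symmetric
  involution K: P_+ = (I+K)/2, P_- = (I-K)/2.\<close>
definition Pplus :: "nat \<Rightarrow> real mat" where
  "Pplus T = (1/2) \<cdot>\<^sub>m (1\<^sub>m T + Kmat T)"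
definition Pminus :: "nat \<Rightarrow> real mat" where
  "Pminus T = (1/2) \<cdot>\<^sub>m (1\<^sub>m T - Kmat T)"

definition Ksqrt :: "nat \<Rightarrow> complex mat" where
  "Ksqrt T = map_mat complex_of_real (Pplus T) + \<i> \<cdot>\<^sub>m map_mat complex_of_real (Pminus T)"

definition orth_mats :: "nat \<Rightarrow> real mat set" where
  "orth_mats T = {W. W \<in> carrier_mat T T \<and> W\<^sup>T * W = 1\<^sub>m T}"

text \<open>X is an adjacency spectral embedding ASE(A,d) of the symmetric n x n
  matrix A: X = V |D|^{1/2}, where D holds the d largest-magnitude eigenvalues
  and V corresponding orthonormal eigenvectors. Equivalently, the columns of V
  are the first d columns of an orthogonal eigenvector matrix U of
  A = U diag(lambda) U^T with eigenvalues ordered by decreasing magnitude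
  (ASE is determined only up to this choice; any choice is allowed).\<close>
definition is_ASE :: "real mat \<Rightarrow> nat \<Rightarrow> real mat \<Rightarrow> bool" where
  "is_ASE A d X \<longleftrightarrow> (let n = dim_row A in
     d \<le> n \<and>
     (\<exists>U lam. U \<in> orth_mats n \<and>
        A = U * mat n n (\<lambda>(i,j). if i = j then lam i else 0) * U\<^sup>T \<and>
        (\<forall>i j. i \<le> j \<and> j < n \<longrightarrow> \<bar>lam j\<bar> \<le> \<bar>lam i\<bar>) \<and>
        X = mat n d (\<lambda>(i,j). U $$ (i,j) * sqrt \<bar>lam j\<bar>)))"

definition pad_zero_cols :: "real mat \<Rightarrow> nat \<Rightarrow> real mat" where
  "pad_zero_cols X T = mat (dim_row X) T (\<lambda>(i,j). if j < dim_col X then X $$ (i,j) else 0)"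

end

theory Submission
  imports Defs
begin


context vec_space begin

lemma rank_mono_span:
  assumes A: "A \<in> carrier_mat n na" and B: "B \<in> carrier_mat n nb"
  and sub: "set (cols A) \<subseteq> span (set (cols B))"
  shows "rank A \<le> rank B"
proof -
  have Bc: "set (cols B) \<subseteq> carrier_vec n" using B cols_dim by blast
  have vs: "vectorspace class_ring (vs (span (set (cols B))))"
    using span_is_subspace[THEN subspace_is_vs, OF Bc] by auto
  have sm: "submodule class_ring (span (set (cols B))) V" by (simp add: span_is_submodule Bc)
  have ss: "subspace class_ring (span (set (cols A))) (vs (span (set (cols B))))"
    using vectorspace.span_is_subspace[OF vs, of "set (cols A)", unfolded span_li_not_depend(1)[OF sub sm]] sub by auto
  have fd: "vectorspace.fin_dim class_ring (vs (span (set (cols B))))"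
       "vectorspace.fin_dim class_ring (vs (span (set (cols B)))\<lparr>carrier := span (set (cols A))\<rparr>)"
    using fin_dim_span_cols A B by auto
  show ?thesis unfolding rank_def using vectorspace.subspace_dim[OF vs ss fd] by simp
qed

lemma mult_vec_in_span:
  assumes A: "A \<in> carrier_mat n na" and v: "v \<in> carrier_vec na"
  shows "A *\<^sub>v v \<in> span (set (cols A))"
proof -
  have Ac: "set (cols A) \<subseteq> carrier_vec n" using A cols_dim by blast
  have "lincomb_list (\<lambda>i. v $ i) (cols A) = mat_of_cols n (cols A) *\<^sub>v vec (length (cols A)) (\<lambda>i. v $ i)"
    by (rule lincomb_list_as_mat_mult) (use Ac in auto)
  also have "\<dots> = A *\<^sub>v v" using A v by (metis carrier_matD(1) carrier_matD(2) carrier_vecD cols_length mat_of_cols_cols vec_eq_iff index_vec dim_vec)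
  finally have eq: "lincomb_list (\<lambda>i. v $ i) (cols A) = A *\<^sub>v v" .
  have "A *\<^sub>v v \<in> span_list (cols A)" unfolding span_list_def
    by (rule CollectI, rule exI[of _ "\<lambda>i. v $ i"], rule eq[symmetric])
  thus ?thesis using span_list_as_span[OF Ac] by simp
qed

lemma rank_mult_le:
  assumes A: "A \<in> carrier_mat n na" and C: "C \<in> carrier_mat na nc"
  shows "rank (A * C) \<le> rank A"
proof (rule rank_mono_span[OF _ A])
  show "A * C \<in> carrier_mat n nc" using A C by auto
  show "set (cols (A * C)) \<subseteq> span (set (cols A))"
  proof
    fix x assume "x \<in> set (cols (A * C))"
    then obtain j where j: "j < nc" "x = col (A * C) j" using A C
      by (metis cols_length cols_nth in_set_conv_nth carrier_matD(2) index_mult_mat(3))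
    have "x = A *\<^sub>v col C j" unfolding j(2) by (rule col_mult2[OF A C j(1)])
    thus "x \<in> span (set (cols A))" using mult_vec_in_span[OF A, of "col C j"] C j by auto
  qed
qed

lemma rank_full_inj:
  assumes A: "A \<in> carrier_mat n k"
  and inj: "\<And>v. v \<in> carrier_vec k \<Longrightarrow> A *\<^sub>v v = 0\<^sub>v n \<Longrightarrow> v = 0\<^sub>v k"
  shows "rank A = k"
proof -
  have dist: "distinct (cols A)"
  proof (rule ccontr)
    assume "\<not> distinct (cols A)"
    then obtain i j where ij: "i < k" "j < k" "i \<noteq> j" "col A i = col A j" using A
      by (metis carrier_matD(2) cols_length cols_nth distinct_conv_nth)
    define v :: "'a vec" where "v = unit_vec k i - unit_vec k j"
    have vc: "v \<in> carrier_vec k" unfolding v_def by auto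
    have "A *\<^sub>v v = A *\<^sub>v unit_vec k i - A *\<^sub>v unit_vec k j"
      unfolding v_def using A by (simp add: mult_minus_distrib_mat_vec)
    also have "\<dots> = 0\<^sub>v n"
    proof (rule eq_vecI)
      fix r assume "r < dim_vec (0\<^sub>v n :: 'a vec)"
      then have r: "r < n" by simp
      have "col A i $ r = col A j $ r" using ij by simp
      moreover have "A $$ (r,i) = col A i $ r" "A $$ (r,j) = col A j $ r" using A r ij(1,2) by auto
      ultimately have "A $$ (r,i) = A $$ (r,j)" by simp
      then show "(A *\<^sub>v unit_vec k i - A *\<^sub>v unit_vec k j) $ r = 0\<^sub>v n $ r"
        using A ij r by (simp add: scalar_prod_right_unit)
    qed (use A in auto)
    finally have "v = 0\<^sub>v k" using inj vc by auto
    moreover have "v $ i = 1" using ij unfolding v_def by auto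
    ultimately show False using ij by auto
  qed
  have "lin_indpt (set (cols A))"
  proof
    assume "lin_dep (set (cols A))"
    then obtain v where "v \<in> carrier_vec k" "v \<noteq> 0\<^sub>v k" "A *\<^sub>v v = 0\<^sub>v n"
      using lin_depE[OF A _ dist] by blast
    thus False using inj by auto
  qed
  thus ?thesis using lin_indpt_full_rank[OF A dist] by auto
qed

end



definition orthcols :: "real mat \<Rightarrow> nat \<Rightarrow> nat \<Rightarrow> bool" where
  "orthcols W T k \<longleftrightarrow> (\<forall>i<k. \<forall>j<k. (\<Sum>t<T. W $$ (t,i) * W $$ (t,j)) = (if i = j then 1 else 0))"

lemma exists_orth_vec:
  fixes Wd :: "real mat"
  assumes k: "k < T"
  shows "\<exists>u. (\<forall>i<k. (\<Sum>t<T. Wd $$ (t,i) * u t) = 0) \<and> (\<Sum>t<T. u t * u t) = 1"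
proof -
  define A :: "real mat" where "A = mat T T (\<lambda>(i,t). if i < k then Wd $$ (t,i) else 0)"
  have AC: "A \<in> carrier_mat T T" unfolding A_def by auto
  have "A = mat\<^sub>r T T (\<lambda>i. if i = T - 1 then 0\<^sub>v T else vec T (\<lambda>t. if i < k then Wd $$ (t,i) else 0))"
    unfolding A_def by (rule eq_matI) (use k in auto)
  hence "det A = 0" using det_row_0[of "T-1" T "\<lambda>i. vec T (\<lambda>t. if i<k then Wd $$ (t,i) else 0)"] k by auto
  then obtain v where v: "v \<in> carrier_vec T" "v \<noteq> 0\<^sub>v T" "A *\<^sub>v v = 0\<^sub>v T"
    using det_0_iff_vec_prod_zero_field[OF AC] by blast
  have orth: "(\<Sum>t<T. Wd $$ (t,i) * v $ t) = 0" if i: "i < k" for i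
  proof -
    have "(A *\<^sub>v v) $ i = 0" using v i k by simp
    moreover have "(A *\<^sub>v v) $ i = (\<Sum>t<T. Wd $$ (t,i) * v $ t)"
      using i k v(1) unfolding A_def by (simp add: scalar_prod_def lessThan_atLeast0)
    ultimately show ?thesis by simp
  qed
  obtain t0 where t0: "t0 < T" "v $ t0 \<noteq> 0" using v by (metis carrier_vecD eq_vecI index_zero_vec(1) index_zero_vec(2))
  define s where "s = (\<Sum>t<T. v $ t * v $ t)"
  have "v $ t0 * v $ t0 \<le> s" unfolding s_def
    by (rule member_le_sum) (use t0 in auto)
  moreover have "v $ t0 * v $ t0 > 0" using t0(2) by (auto simp: zero_less_mult_iff linorder_neq_iff)
  ultimately have s: "s > 0" by linarith
  define u where "u t = v $ t / sqrt s" for t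
  have "(\<Sum>t<T. u t * u t) = (\<Sum>t<T. v $ t * v $ t) / s"
    unfolding u_def using s by (simp add: sum_divide_distrib)
  also have "\<dots> = 1" using s unfolding s_def by simp
  finally have 1: "(\<Sum>t<T. u t * u t) = 1" .
  have "(\<Sum>t<T. Wd $$ (t,i) * u t) = 0" if i: "i < k" for i
  proof -
    have "(\<Sum>t<T. Wd $$ (t,i) * u t) = (\<Sum>t<T. Wd $$ (t,i) * v $ t) / sqrt s"
      unfolding u_def by (simp add: sum_divide_distrib)
    thus ?thesis using orth[OF i] by simp
  qed
  with 1 show ?thesis by blast
qed

lemma orth_extend_aux:
  fixes Wd :: "real mat"
  assumes "m = T - k" "k \<le> T" "orthcols Wd T k"
  shows "\<exists>W. orthcols W T T \<and> (\<forall>i<T. \<forall>j<k. W $$ (i,j) = Wd $$ (i,j))"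
  using assms
proof (induction m arbitrary: k Wd)
  case 0
  then have "k = T" by simp
  then show ?case using 0 by blast
next
  case (Suc m)
  then have k: "k < T" by simp
  obtain u where u: "\<forall>i<k. (\<Sum>t<T. Wd $$ (t,i) * u t) = 0" "(\<Sum>t<T. u t * u t) = 1"
    using exists_orth_vec[OF k] by blast
  define Wd' where "Wd' = mat T (Suc k) (\<lambda>(t,j). if j < k then Wd $$ (t,j) else u t)"
  have "orthcols Wd' T (Suc k)" unfolding orthcols_def
  proof (intro allI impI)
    fix i j assume i: "i < Suc k" and j: "j < Suc k"
    have e: "\<And>t j. t < T \<Longrightarrow> j < Suc k \<Longrightarrow> Wd' $$ (t,j) = (if j < k then Wd $$ (t,j) else u t)"
      unfolding Wd'_def by simp
    have "(\<Sum>t<T. Wd' $$ (t,i) * Wd' $$ (t,j)) =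
       (\<Sum>t<T. (if i < k then Wd $$ (t,i) else u t) * (if j < k then Wd $$ (t,j) else u t))"
      by (rule sum.cong) (use i j in \<open>auto simp: e\<close>)
    also have "\<dots> = (if i = j then 1 else 0)"
    proof (cases "i < k")
      case True
      note ii = True
      show ?thesis
      proof (cases "j < k")
        case True
        then show ?thesis using Suc.prems(3) ii unfolding orthcols_def by simp
      next
        case False
        then have "j = k" using j by simp
        then show ?thesis using u ii by simp
      qed
    next
      case False
      then have ik: "i = k" using i by simp
      show ?thesis
      proof (cases "j < k")
        case True
        then show ?thesis using u ik by (simp add: mult.commute)
      next
        case False
        then have "j = k" using j by simp
        then show ?thesis using u ik by simp
      qed
    qed
    finally show "(\<Sum>t<T. Wd' $$ (t,i) * Wd' $$ (t,j)) = (if i = j then 1 else 0)" .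
  qed
  moreover have "m = T - Suc k" using Suc.prems(1) by simp
  ultimately obtain W where W: "orthcols W T T" "\<forall>i<T. \<forall>j<Suc k. W $$ (i,j) = Wd' $$ (i,j)"
    using Suc.IH[of "Suc k" Wd'] k by auto
  have "\<forall>i<T. \<forall>j<k. W $$ (i,j) = Wd $$ (i,j)" using W(2) unfolding Wd'_def by auto
  with W(1) show ?case by blast
qed

lemma orth_extend:
  fixes Wd :: "real mat"
  assumes "k \<le> T" "orthcols Wd T k"
  shows "\<exists>W \<in> carrier_mat T T. W\<^sup>T * W = 1\<^sub>m T \<and> (\<forall>i<T. \<forall>j<k. W $$ (i,j) = Wd $$ (i,j))"
proof -
  obtain W where W: "orthcols W T T" "\<forall>i<T. \<forall>j<k. W $$ (i,j) = Wd $$ (i,j)"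
    using orth_extend_aux[OF refl assms] by blast
  define W' where "W' = mat T T (\<lambda>(i,j). W $$ (i,j))"
  have "W'\<^sup>T * W' = 1\<^sub>m T"
  proof (rule eq_matI)
    fix i j assume "i < dim_row (1\<^sub>m T :: real mat)" "j < dim_col (1\<^sub>m T :: real mat)"
    then have ij: "i < T" "j < T" by auto
    have "(W'\<^sup>T * W') $$ (i,j) = (\<Sum>t<T. W $$ (t,i) * W $$ (t,j))"
      using ij unfolding W'_def by (simp add: scalar_prod_def lessThan_atLeast0)
    then show "(W'\<^sup>T * W') $$ (i,j) = 1\<^sub>m T $$ (i,j)" using W(1) ij unfolding orthcols_def by simp
  qed (auto simp: W'_def)
  moreover have "W' \<in> carrier_mat T T" unfolding W'_def by simp
  moreover have "\<forall>i<T. \<forall>j<k. W' $$ (i,j) = Wd $$ (i,j)" using W(2) assms(1) unfolding W'_def by auto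
  ultimately show ?thesis by blast
qed



lemma root_sum:
  assumes T: "T > 0"
  shows "(\<Sum>t<T. cis (2*pi*real_of_int q * real t / real T)) = (if int T dvd q then of_nat T else 0)"
proof -
  define z where "z = cis (2*pi*real_of_int q / real T)"
  have zt: "cis (2*pi*real_of_int q * real t / real T) = z ^ t" for t
    unfolding z_def DeMoivre by (simp add: algebra_simps)
  have sum: "(\<Sum>t<T. cis (2*pi*real_of_int q * real t / real T)) = (\<Sum>t<T. z ^ t)"
    by (simp add: zt)
  show ?thesis
  proof (cases "int T dvd q")
    case True
    then obtain m where m: "q = int T * m" by blast
    have "2*pi*real_of_int q / real T = 2*pi*real_of_int m" using T m by simp
    hence "z = 1" unfolding z_def by (simp add: cis_multiple_2pi)
    thus ?thesis using sum True by simp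
  next
    case False
    have "z \<noteq> 1"
    proof
      assume "z = 1"
      hence "cos (2*pi*real_of_int q / real T) = 1" unfolding z_def by (metis cis.sel(1) one_complex.sel(1))
      then obtain x :: int where x: "2*pi*real_of_int q / real T = real_of_int x * 2 * pi"
        using cos_one_2pi_int by blast
      hence "real_of_int q = real_of_int x * real T" using T by (simp add: field_simps)
      hence "q = x * int T" by (metis of_int_eq_iff of_int_mult of_int_of_nat_eq)
      thus False using False by simp
    qed
    moreover have "z ^ T = 1" unfolding z_def DeMoivre using T
      by (simp add: cis_multiple_2pi)
    ultimately show ?thesis using sum False by (simp add: sum_gp_strict)
  qed
qed

lemma cos_sum:
  assumes T: "T > 0"
  shows "(\<Sum>t<T. cos (2*pi*real_of_int q * real t / real T)) = (if int T dvd q then real T else 0)"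
proof -
  have "(\<Sum>t<T. cos (2*pi*real_of_int q * real t / real T)) = Re (\<Sum>t<T. cis (2*pi*real_of_int q * real t / real T))"
    by (simp add: Re_sum)
  also have "\<dots> = (if int T dvd q then real T else 0)" using root_sum[OF T] by simp
  finally show ?thesis .
qed

lemma sin_sum:
  assumes T: "T > 0"
  shows "(\<Sum>t<T. sin (2*pi*real_of_int q * real t / real T)) = 0"
proof -
  have "(\<Sum>t<T. sin (2*pi*real_of_int q * real t / real T)) = Im (\<Sum>t<T. cis (2*pi*real_of_int q * real t / real T))"
    by (simp add: Im_sum)
  also have "\<dots> = 0" using root_sum[OF T] by simp
  finally show ?thesis .
qed

definition hart :: "nat \<Rightarrow> real mat" where
  "hart T = mat T T (\<lambda>(t,k). cos (2*pi*real k*real t/real T) + sin (2*pi*real k*real t/real T))"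

lemma hart_orth:
  assumes j: "j < T" and k: "k < T"
  shows "(\<Sum>t<T. hart T $$ (t,j) * hart T $$ (t,k)) = (if j = k then real T else 0)"
proof -
  have T: "T > 0" using j by simp
  have "(\<Sum>t<T. hart T $$ (t,j) * hart T $$ (t,k)) =
     (\<Sum>t<T. cos (2*pi*real_of_int (int j - int k) * real t / real T) + sin (2*pi*real_of_int (int j + int k) * real t / real T))"
  proof (rule sum.cong)
    fix t assume "t \<in> {..<T}"
    then have t: "t < T" by simp
    define a where "a = 2*pi*real j*real t/real T"
    define b where "b = 2*pi*real k*real t/real T"
    have "hart T $$ (t,j) * hart T $$ (t,k) = (cos a + sin a) * (cos b + sin b)"
      unfolding hart_def a_def b_def using t j k by simp
    also have "\<dots> = cos (a - b) + sin (a + b)" by (simp add: cos_diff sin_add algebra_simps)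
    also have "a - b = 2*pi*real_of_int (int j - int k) * real t / real T" unfolding a_def b_def using T by (simp add: field_simps)
    also have "a + b = 2*pi*real_of_int (int j + int k) * real t / real T" unfolding a_def b_def using T by (simp add: field_simps)
    finally show "hart T $$ (t,j) * hart T $$ (t,k) = cos (2*pi*real_of_int (int j - int k) * real t / real T) + sin (2*pi*real_of_int (int j + int k) * real t / real T)" .
  qed simp
  also have "\<dots> = (if int T dvd (int j - int k) then real T else 0)"
    by (simp only: sum.distrib cos_sum[OF T] sin_sum[OF T])
  also have "(int T dvd (int j - int k)) = (j = k)"
  proof
    assume "int T dvd (int j - int k)"
    then obtain m where m: "int j - int k = int T * m" by blast
    have "m = 0"
    proof (rule ccontr)
      assume "m \<noteq> 0"
      hence "\<bar>int T * m\<bar> \<ge> int T" by (simp add: abs_mult) (metis abs_ge_zero mult.right_neutral mult_left_mono of_nat_0_le_iff zero_less_abs_iff int_one_le_iff_zero_less)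
      thus False using m j k by linarith
    qed
    thus "j = k" using m by simp
  qed simp
  finally show ?thesis .
qed



lemma Ztilde_carrier: "Z \<in> carrier_mat n T \<Longrightarrow> Ztilde Z \<in> carrier_mat n T"
  unfolding Ztilde_def Sigma_inv_sqrt_def centering_def by auto

lemma exp_fourier:
  "exp (- (2 * of_real pi * \<i> * of_nat k * of_nat t / of_nat T)) =
   Complex (cos (2*pi*real k*real t/real T)) (- sin (2*pi*real k*real t/real T))"
proof -
  have eq: "- (2 * of_real pi * \<i> * of_nat k * of_nat t / of_nat T) = \<i> * complex_of_real (- (2*pi*real k*real t/real T))"
    by (simp add: field_simps)
  have "exp (- (2 * of_real pi * \<i> * of_nat k * of_nat t / of_nat T)) = cis (- (2*pi*real k*real t/real T))"
    by (simp only: cis_conv_exp eq)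
  also have "\<dots> = Complex (cos (2*pi*real k*real t/real T)) (- sin (2*pi*real k*real t/real T))"
    by (simp add: complex_eq_iff)
  finally show ?thesis .
qed

lemma fourier_entry:
  assumes Z: "Z \<in> carrier_mat n T" and i: "i < n" and k: "k < T"
  shows "fourier_mat Z $$ (i,k) = Complex (\<Sum>t<T. Ztilde Z $$ (i,t) * cos (2*pi*real k*real t/real T))
                                          (- (\<Sum>t<T. Ztilde Z $$ (i,t) * sin (2*pi*real k*real t/real T)))"
proof -
  have "fourier_mat Z $$ (i,k) = (\<Sum>t<T. complex_of_real (Ztilde Z $$ (i,t)) *
        Complex (cos (2*pi*real k*real t/real T)) (- sin (2*pi*real k*real t/real T)))"
    using Z i k unfolding fourier_mat_def by (simp add: exp_fourier)
  also have "\<dots> = Complex (\<Sum>t<T. Ztilde Z $$ (i,t) * cos (2*pi*real k*real t/real T))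
                                          (- (\<Sum>t<T. Ztilde Z $$ (i,t) * sin (2*pi*real k*real t/real T)))"
    by (simp add: complex_eq_iff Re_sum Im_sum sum_negf)
  finally show ?thesis .
qed

definition sig :: "nat \<Rightarrow> nat \<Rightarrow> nat" where "sig T k = (if k = 0 then 0 else T - k)"

lemma fourier_sig:
  assumes Z: "Z \<in> carrier_mat n T" and i: "i < n" and k: "k < T"
  shows "fourier_mat Z $$ (i, sig T k) = cnj (fourier_mat Z $$ (i,k))"
proof (cases "k = 0")
  case True
  then show ?thesis using fourier_entry[OF Z i k] by (simp add: sig_def complex_eq_iff)
next
  case False
  have sk: "sig T k < T" using False k by (simp add: sig_def)
  have c: "cos (2*pi*real (T-k)*real t/real T) = cos (2*pi*real k*real t/real T)"
   and s: "sin (2*pi*real (T-k)*real t/real T) = - sin (2*pi*real k*real t/real T)" for t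
  proof -
    have T: "real T > 0" using k by simp
    have e: "2*pi*real (T-k)*real t/real T = 2*pi*real_of_int (int t) - 2*pi*real k*real t/real T"
      using k T by (simp add: of_nat_diff field_simps)
    show "cos (2*pi*real (T-k)*real t/real T) = cos (2*pi*real k*real t/real T)"
      unfolding e cos_diff cos_int_2pin sin_int_2pin by simp
    show "sin (2*pi*real (T-k)*real t/real T) = - sin (2*pi*real k*real t/real T)"
      unfolding e sin_diff cos_int_2pin sin_int_2pin by simp
  qed
  show ?thesis using fourier_entry[OF Z i k] fourier_entry[OF Z i sk] False
    by (simp add: sig_def complex_eq_iff c s sum_negf)
qed

lemma Ksqrt_entry:
  assumes s: "s < T" and k: "k < T"
  shows "Ksqrt T $$ (s,k) = (if s = k then (1+\<i>)/2 else 0) + (if s = sig T k then (1-\<i>)/2 else 0)"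
proof -
  have K: "Kmat T $$ (s,k) = (if s = sig T k then 1 else 0)"
    unfolding Kmat_def sig_def using s k by auto
  have "Ksqrt T $$ (s,k) = complex_of_real (((if s = k then 1 else 0) + (if (s = 0 \<and> k = 0) \<or> s + k = T then 1 else 0))/2)
     + \<i> * complex_of_real (((if s = k then 1 else 0) - (if (s = 0 \<and> k = 0) \<or> s + k = T then 1 else 0))/2)"
    unfolding Ksqrt_def Pplus_def Pminus_def Kmat_def using s k by simp
  also have "\<dots> = (if s = k then (1+\<i>)/2 else 0) + (if s = sig T k then (1-\<i>)/2 else 0)"
    using K[unfolded Kmat_def] s k by (auto simp: complex_eq_iff)
  finally show ?thesis .
qed

lemma fourier_Ksqrt:
  assumes Z: "Z \<in> carrier_mat n T"
  shows "fourier_mat Z * Ksqrt T = map_mat complex_of_real (Ztilde Z * hart T)"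
proof (rule eq_matI)
  have Zt: "Ztilde Z \<in> carrier_mat n T" using Ztilde_carrier[OF Z] .
  have F: "fourier_mat Z \<in> carrier_mat n T" using Z unfolding fourier_mat_def by auto
  have KC: "Ksqrt T \<in> carrier_mat T T" unfolding Ksqrt_def Pplus_def Pminus_def Kmat_def by auto
  show "dim_row (fourier_mat Z * Ksqrt T) = dim_row (map_mat complex_of_real (Ztilde Z * hart T))"
    using F Zt by simp
  show "dim_col (fourier_mat Z * Ksqrt T) = dim_col (map_mat complex_of_real (Ztilde Z * hart T))"
    using KC by (simp add: hart_def)
  fix i k assume "i < dim_row (map_mat complex_of_real (Ztilde Z * hart T))"
     "k < dim_col (map_mat complex_of_real (Ztilde Z * hart T))"
  then have i: "i < n" and k: "k < T" using Zt by (auto simp: hart_def)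
  have sk: "sig T k < T" using k by (simp add: sig_def)
  define f where "f = fourier_mat Z $$ (i,k)"
  have "(fourier_mat Z * Ksqrt T) $$ (i,k) = (\<Sum>s<T. fourier_mat Z $$ (i,s) * Ksqrt T $$ (s,k))"
    using F KC i k by (simp add: scalar_prod_def lessThan_atLeast0)
  also have "\<dots> = (\<Sum>s<T. fourier_mat Z $$ (i,s) * (if s = k then (1+\<i>)/2 else 0)
                    + fourier_mat Z $$ (i,s) * (if s = sig T k then (1-\<i>)/2 else 0))"
    by (rule sum.cong) (use k in \<open>auto simp: Ksqrt_entry distrib_left\<close>)
  also have "\<dots> = f * ((1+\<i>)/2) + fourier_mat Z $$ (i, sig T k) * ((1-\<i>)/2)"
    unfolding sum.distrib f_def using k sk by (simp add: if_distrib cong: if_cong)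
  also have "\<dots> = f * ((1+\<i>)/2) + cnj f * ((1-\<i>)/2)" unfolding f_def using fourier_sig[OF Z i k] by simp
  also have "\<dots> = complex_of_real (Re f - Im f)" by (simp add: complex_eq_iff field_simps)
  also have "Re f - Im f = (Ztilde Z * hart T) $$ (i,k)"
  proof -
    have "(Ztilde Z * hart T) $$ (i,k) = (\<Sum>t<T. Ztilde Z $$ (i,t) * hart T $$ (t,k))"
      using Zt i k by (simp add: hart_def scalar_prod_def lessThan_atLeast0)
    also have "\<dots> = (\<Sum>t<T. Ztilde Z $$ (i,t) * cos (2*pi*real k*real t/real T)) + (\<Sum>t<T. Ztilde Z $$ (i,t) * sin (2*pi*real k*real t/real T))"
      unfolding sum.distrib[symmetric] by (rule sum.cong) (use k in \<open>auto simp: hart_def distrib_left\<close>)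
    finally show ?thesis unfolding f_def using fourier_entry[OF Z i k] by simp
  qed
  finally show "(fourier_mat Z * Ksqrt T) $$ (i,k) = map_mat complex_of_real (Ztilde Z * hart T) $$ (i,k)"
    using Zt i k by (simp add: hart_def)
qed

lemma Zhart_entry:
  assumes Z: "Z \<in> carrier_mat n T" and i: "i < n" and k: "k < T"
  shows "(Ztilde Z * hart T) $$ (i,k) = Re (fourier_mat Z $$ (i,k)) - Im (fourier_mat Z $$ (i,k))"
proof -
  have Zt: "Ztilde Z \<in> carrier_mat n T" using Ztilde_carrier[OF Z] .
  have "(Ztilde Z * hart T) $$ (i,k) = (\<Sum>t<T. Ztilde Z $$ (i,t) * hart T $$ (t,k))"
    using Zt i k by (simp add: hart_def scalar_prod_def lessThan_atLeast0)
  also have "\<dots> = (\<Sum>t<T. Ztilde Z $$ (i,t) * cos (2*pi*real k*real t/real T)) + (\<Sum>t<T. Ztilde Z $$ (i,t) * sin (2*pi*real k*real t/real T))"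
    unfolding sum.distrib[symmetric] by (rule sum.cong) (use k in \<open>auto simp: hart_def distrib_left\<close>)
  finally show ?thesis using fourier_entry[OF Z i k] by simp
qed



lemma rank_gram_le:
  fixes Y :: "real mat"
  assumes Y: "Y \<in> carrier_mat n T" and S: "S \<subseteq> {..<T}"
    and zero: "\<And>i k. i < n \<Longrightarrow> k < T \<Longrightarrow> k \<notin> S \<Longrightarrow> Y $$ (i,k) = 0"
  shows "vec_space.rank n (Y * Y\<^sup>T) \<le> card S"
proof -
  have fS: "finite S" using S finite_subset by blast
  define L where "L = sorted_list_of_set S"
  define m where "m = length L"
  have dL: "distinct L" and sL: "set L = S" using fS unfolding L_def by auto
  have mS: "m = card S" unfolding m_def L_def by simp
  have bij: "bij_betw ((!) L) {..<m} S" using bij_betw_nth[OF dL _ sL[symmetric]] m_def by simp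
  define B where "B = mat n m (\<lambda>(i,j). Y $$ (i, L ! j))"
  have BC: "B \<in> carrier_mat n m" unfolding B_def by simp
  have LT: "j < m \<Longrightarrow> L ! j < T" for j using S sL m_def nth_mem by blast
  have "B * B\<^sup>T = Y * Y\<^sup>T"
  proof (rule eq_matI)
    fix i l assume "i < dim_row (Y * Y\<^sup>T)" "l < dim_col (Y * Y\<^sup>T)"
    then have il: "i < n" "l < n" using Y by auto
    have "(B * B\<^sup>T) $$ (i,l) = (\<Sum>j<m. Y $$ (i, L ! j) * Y $$ (l, L ! j))"
      using il BC unfolding B_def by (simp add: scalar_prod_def lessThan_atLeast0)
    also have "\<dots> = (\<Sum>k\<in>S. Y $$ (i, k) * Y $$ (l, k))"
      using sum.reindex_bij_betw[OF bij, of "\<lambda>k. Y $$ (i, k) * Y $$ (l, k)"] by simp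
    also have "\<dots> = (\<Sum>k<T. Y $$ (i, k) * Y $$ (l, k))"
      by (rule sum.mono_neutral_left) (use S zero il in auto)
    also have "\<dots> = (Y * Y\<^sup>T) $$ (i,l)"
      using il Y by (simp add: scalar_prod_def lessThan_atLeast0)
    finally show "(B * B\<^sup>T) $$ (i,l) = (Y * Y\<^sup>T) $$ (i,l)" .
  qed (use BC Y in auto)
  hence "vec_space.rank n (Y * Y\<^sup>T) = vec_space.rank n (B * B\<^sup>T)" by simp
  also have "\<dots> \<le> vec_space.rank n B" by (rule vec_space.rank_mult_le[OF BC]) (use BC in auto)
  also have "\<dots> \<le> m" by (rule vec_space.rank_le_nc[OF BC])
  finally show ?thesis using mS by simp
qed



lemma ase_part:
  fixes Y X R :: "real mat"
  assumes Y: "Y \<in> carrier_mat n T" and R: "R = Y * Y\<^sup>T"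
    and dT: "vec_space.rank n R \<le> T"
    and ase: "is_ASE R (vec_space.rank n R) X"
  shows "\<exists>W \<in> carrier_mat T T. W\<^sup>T * W = 1\<^sub>m T \<and> Y * W = pad_zero_cols X T"
proof -
  define d where "d = vec_space.rank n R"
  have RC: "R \<in> carrier_mat n n" using R Y by auto
  have dimR: "dim_row R = n" using RC by auto
  from ase obtain U lam where dn: "d \<le> n" and U: "U \<in> orth_mats n"
    and Rdec: "R = U * mat n n (\<lambda>(i,j). if i = j then lam i else 0) * U\<^sup>T"
    and sorted: "\<forall>i j. i \<le> j \<and> j < n \<longrightarrow> \<bar>lam j\<bar> \<le> \<bar>lam i\<bar>"
    and Xdef: "X = mat n d (\<lambda>(i,j). U $$ (i,j) * sqrt \<bar>lam j\<bar>)"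
    unfolding is_ASE_def d_def Let_def dimR by blast
  define Lm :: "real mat" where "Lm = mat n n (\<lambda>(i,j). if i = j then lam i else 0)"
  have UC: "U \<in> carrier_mat n n" and UtU: "U\<^sup>T * U = 1\<^sub>m n" using U unfolding orth_mats_def by auto
  have UtC: "U\<^sup>T \<in> carrier_mat n n" using UC by simp
  have UUt: "U * U\<^sup>T = 1\<^sub>m n" using mat_mult_left_right_inverse[OF UtC UC UtU] .
  have LC: "Lm \<in> carrier_mat n n" unfolding Lm_def by simp
  have Rdec': "R = U * Lm * U\<^sup>T" using Rdec unfolding Lm_def .
  have RU: "R * U = U * Lm"
  proof -
    have "R * U = U * Lm * (U\<^sup>T * U)" unfolding Rdec' using UC LC UtC
      by (simp add: assoc_mult_mat[of _ n n _ n _ n])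
    also have "\<dots> = U * Lm" unfolding UtU using UC LC by simp
    finally show ?thesis .
  qed
  have UtRU: "U\<^sup>T * R * U = Lm"
  proof -
    have "U\<^sup>T * R * U = U\<^sup>T * (R * U)" using UtC RC UC by (simp add: assoc_mult_mat[of _ n n _ n _ n])
    also have "\<dots> = (U\<^sup>T * U) * Lm" unfolding RU using UtC UC LC by (simp add: assoc_mult_mat[of _ n n _ n _ n])
    also have "\<dots> = Lm" unfolding UtU using LC by simp
    finally show ?thesis .
  qed
  define u where "u j = col U j" for j
  have uC: "u j \<in> carrier_vec n" for j unfolding u_def carrier_vec_def using UC by simp
  have uu: "u i \<bullet> u j = (if i = j then 1 else 0)" if "i < n" "j < n" for i j
  proof -
    have "(U\<^sup>T * U) $$ (i,j) = u i \<bullet> u j" unfolding u_def using that UC by simp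
    thus ?thesis unfolding UtU using that by simp
  qed
  have eig: "R *\<^sub>v u j = lam j \<cdot>\<^sub>v u j" if j: "j < n" for j
  proof -
    have "R *\<^sub>v u j = col (R * U) j" unfolding u_def by (rule col_mult2[OF RC UC j, symmetric])
    also have "\<dots> = col (U * Lm) j" unfolding RU ..
    also have "\<dots> = lam j \<cdot>\<^sub>v u j"
    proof (rule eq_vecI)
      fix r assume "r < dim_vec (lam j \<cdot>\<^sub>v u j)"
      then have r: "r < n" using uC[of j] by simp
      have cL: "col Lm j = lam j \<cdot>\<^sub>v unit_vec n j"
        by (rule eq_vecI) (use j in \<open>auto simp: Lm_def\<close>)
      have "col (U * Lm) j $ r = row U r \<bullet> col Lm j" using UC LC r j by simp
      also have "\<dots> = lam j * (row U r \<bullet> unit_vec n j)" unfolding cL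
        by (rule scalar_prod_smult_right) (use UC in auto)
      also have "\<dots> = lam j * U $$ (r,j)" using UC r j by simp
      finally show "col (U * Lm) j $ r = (lam j \<cdot>\<^sub>v u j) $ r" unfolding u_def using UC r j by simp
    qed (use UC LC uC[of j] in auto)
    finally show ?thesis .
  qed
  define a where "a j = Y\<^sup>T *\<^sub>v u j" for j
  have aC: "a j \<in> carrier_vec T" for j unfolding a_def using Y uC by auto
  have YYt: "Y *\<^sub>v (Y\<^sup>T *\<^sub>v x) = R *\<^sub>v x" if "x \<in> carrier_vec n" for x
    unfolding R using assoc_mult_mat_vec[of Y n T "Y\<^sup>T" n x] Y that by simp
  have ua: "u i \<bullet> (Y *\<^sub>v v) = a i \<bullet> v" if "v \<in> carrier_vec T" for i v
    unfolding a_def using transpose_vec_mult_scalar[OF Y that uC] by simp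
  have aa: "a i \<bullet> a j = lam j * (if i = j then 1 else 0)" if "i < n" "j < n" for i j
  proof -
    have "a i \<bullet> a j = u i \<bullet> (R *\<^sub>v u j)" using ua[OF aC] YYt[OF uC] unfolding a_def by simp
    also have "\<dots> = lam j * (u i \<bullet> u j)" unfolding eig[OF that(2)]
      by (rule scalar_prod_smult_right) (use uC[of i] uC[of j] in auto)
    finally show ?thesis using uu[OF that] by simp
  qed
  have sq: "a i \<bullet> a i = (\<Sum>t<T. a i $ t * a i $ t)" for i
    using aC[of i] by (simp add: scalar_prod_def lessThan_atLeast0)
  have nonneg: "lam j \<ge> 0" if "j < n" for j
  proof -
    have "lam j = a j \<bullet> a j" using aa[OF that that] by simp
    also have "\<dots> \<ge> 0" unfolding sq by (rule sum_nonneg) simp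
    finally show ?thesis .
  qed
  define E :: "nat \<Rightarrow> real mat" where "E j = mat n j (\<lambda>(r,c). if r = c then 1 else 0)" for j
  have EC: "E j \<in> carrier_mat n j" for j unfolding E_def by simp
  have LE: "Lm * E j = mat n j (\<lambda>(i,c). if i = c then lam i else 0)" if j: "j \<le> n" for j
  proof (rule eq_matI)
    fix i c assume "i < dim_row (mat n j (\<lambda>(i,c). if i = c then lam i else 0))"
      "c < dim_col (mat n j (\<lambda>(i,c). if i = c then lam i else 0))"
    then have ic: "i < n" "c < j" by auto
    have "(Lm * E j) $$ (i,c) = (\<Sum>r<n. (if i = r then lam i else 0) * (if r = c then 1 else 0))"
      using ic j unfolding Lm_def E_def by (simp add: scalar_prod_def lessThan_atLeast0)
    also have "\<dots> = (if i = c then lam i else 0)"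
      using ic by (simp add: if_distrib cong: if_cong)
    finally show "(Lm * E j) $$ (i,c) = mat n j (\<lambda>(i,c). if i = c then lam i else 0) $$ (i,c)"
      using ic by simp
  qed (use LC EC in auto)
  have R2: "j \<le> d" if j: "j \<le> n" and nz: "\<forall>i<j. lam i \<noteq> 0" for j
  proof -
    define B where "B = R * (U * E j)"
    have BC: "B \<in> carrier_mat n j" unfolding B_def using RC UC EC[of j] by auto
    have UtB: "U\<^sup>T * B = Lm * E j"
    proof -
      have "U\<^sup>T * B = (U\<^sup>T * R * U) * E j" unfolding B_def using UtC RC UC EC[of j]
        by (simp add: assoc_mult_mat[of _ n n _ n _ j] assoc_mult_mat[of _ n n _ n _ n])
      thus ?thesis unfolding UtRU .
    qed
    have "vec_space.rank n B = j"
    proof (rule vec_space.rank_full_inj[OF BC])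
      fix v :: "real vec" assume v: "v \<in> carrier_vec j" and Bv: "B *\<^sub>v v = 0\<^sub>v n"
      have "(Lm * E j) *\<^sub>v v = U\<^sup>T *\<^sub>v (B *\<^sub>v v)" unfolding UtB[symmetric]
        using UtC BC v by (simp add: assoc_mult_mat_vec)
      also have "\<dots> = 0\<^sub>v n" unfolding Bv using UtC by (intro eq_vecI) (auto simp: row_def)
      finally have z: "(Lm * E j) *\<^sub>v v = 0\<^sub>v n" .
      show "v = 0\<^sub>v j"
      proof (rule eq_vecI)
        fix i assume "i < dim_vec (0\<^sub>v j :: real vec)"
        then have i: "i < j" by simp
        have "((Lm * E j) *\<^sub>v v) $ i = (\<Sum>c<j. (if i = c then lam i else 0) * v $ c)"
          unfolding LE[OF j] using i j v by (simp add: scalar_prod_def lessThan_atLeast0)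
        also have "\<dots> = (\<Sum>c<j. if c = i then lam i * v $ c else 0)" by (rule sum.cong) auto
        also have "\<dots> = lam i * v $ i" using i by simp
        finally have "lam i * v $ i = 0" using z i j by simp
        thus "v $ i = 0\<^sub>v j $ i" using nz i by simp
      qed (use v in auto)
    qed
    moreover have "vec_space.rank n B \<le> d" unfolding B_def d_def
      by (rule vec_space.rank_mult_le[OF RC]) (use UC EC[of j] in auto)
    ultimately show ?thesis by simp
  qed
  have R3: "d \<le> j" if j: "j < n" and z: "lam j = 0" for j
  proof -
    have zz: "lam i = 0" if "j \<le> i" "i < n" for i
    proof -
      have "\<bar>lam i\<bar> \<le> \<bar>lam j\<bar>" using sorted that by blast
      thus ?thesis using z by simp
    qed
    have "Lm = (Lm * E j) * (E j)\<^sup>T"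
    proof (rule eq_matI)
      fix i s assume "i < dim_row ((Lm * E j) * (E j)\<^sup>T)" "s < dim_col ((Lm * E j) * (E j)\<^sup>T)"
      then have iss: "i < n" "s < n" using LC EC[of j] by auto
      have "((Lm * E j) * (E j)\<^sup>T) $$ (i,s) = (\<Sum>c<j. (if i = c then lam i else 0) * (if s = c then 1 else 0))"
        unfolding LE[OF less_imp_le[OF j]] using iss by (simp add: E_def scalar_prod_def lessThan_atLeast0)
      also have "\<dots> = (\<Sum>c<j. if c = i then (if s = i then lam i else 0) else 0)"
        by (rule sum.cong[OF refl], rename_tac c, case_tac "c = i") simp_all
      also have "\<dots> = (if i = s \<and> i < j then lam i else 0)" using iss by (cases "i = s") simp_all
      also have "\<dots> = Lm $$ (i,s)" unfolding Lm_def using iss zz by auto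
      finally show "Lm $$ (i,s) = ((Lm * E j) * (E j)\<^sup>T) $$ (i,s)" by simp
    qed (use LC EC[of j] in auto)
    hence "R = U * ((Lm * E j) * (E j)\<^sup>T) * U\<^sup>T" unfolding Rdec' by simp
    also have "\<dots> = U * (Lm * E j) * (E j)\<^sup>T * U\<^sup>T"
      using UC LC EC[of j] by (subst assoc_mult_mat[of U n n _ j _ n]) auto
    also have "\<dots> = (U * (Lm * E j)) * ((E j)\<^sup>T * U\<^sup>T)"
      using UC LC EC[of j] by (subst assoc_mult_mat[of _ n j _ n _ n]) auto
    finally have "R = (U * (Lm * E j)) * ((E j)\<^sup>T * U\<^sup>T)" .
    hence "d = vec_space.rank n ((U * (Lm * E j)) * ((E j)\<^sup>T * U\<^sup>T))" unfolding d_def by simp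
    also have "\<dots> \<le> vec_space.rank n (U * (Lm * E j))"
      by (rule vec_space.rank_mult_le) (use UC LC EC[of j] in auto)
    also have "\<dots> \<le> j" by (rule vec_space.rank_le_nc) (use UC LC EC[of j] in auto)
    finally show ?thesis .
  qed
  have pos: "lam i > 0" if "i < d" for i
  proof -
    have "lam i \<noteq> 0" using R3[of i] that dn by force
    thus ?thesis using nonneg[of i] that dn by simp
  qed
  have zero: "lam i = 0" if "d \<le> i" "i < n" for i
  proof (rule ccontr)
    assume "lam i \<noteq> 0"
    have "lam i' \<noteq> 0" if "i' < Suc i" for i'
    proof -
      have "\<bar>lam i\<bar> \<le> \<bar>lam i'\<bar>" using sorted that \<open>i < n\<close> by simp
      thus ?thesis using \<open>lam i \<noteq> 0\<close> by auto
    qed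
    hence "\<forall>i'<Suc i. lam i' \<noteq> 0" by blast
    hence "Suc i \<le> d" using R2[of "Suc i"] that by simp
    thus False using that by simp
  qed
  have dT': "d \<le> T" using dT unfolding d_def .
  define Wd :: "real mat" where "Wd = mat T d (\<lambda>(t,j). a j $ t / sqrt (lam j))"
  have "orthcols Wd T d" unfolding orthcols_def
  proof (intro allI impI)
    fix i j assume i: "i < d" and j: "j < d"
    have "(\<Sum>t<T. Wd $$ (t,i) * Wd $$ (t,j)) = (\<Sum>t<T. a i $ t * a j $ t) / (sqrt (lam i) * sqrt (lam j))"
      unfolding sum_divide_distrib by (rule sum.cong) (use i j in \<open>simp_all add: Wd_def\<close>)
    also have "(\<Sum>t<T. a i $ t * a j $ t) = a i \<bullet> a j"
      using aC[of i] aC[of j] by (simp add: scalar_prod_def lessThan_atLeast0)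
    also have "\<dots> = lam j * (if i = j then 1 else 0)" using aa i j dn by simp
    finally show "(\<Sum>t<T. Wd $$ (t,i) * Wd $$ (t,j)) = (if i = j then 1 else 0)"
      using pos[OF i] pos[OF j] by (cases "i = j") simp_all
  qed
  then obtain W where WC: "W \<in> carrier_mat T T" and WtW: "W\<^sup>T * W = 1\<^sub>m T"
    and Wd: "\<forall>i<T. \<forall>j<d. W $$ (i,j) = Wd $$ (i,j)"
    using orth_extend[OF dT'] by blast
  have colW: "col W j = (1 / sqrt (lam j)) \<cdot>\<^sub>v a j" if j: "j < d" for j
  proof (rule eq_vecI)
    show "dim_vec (col W j) = dim_vec ((1 / sqrt (lam j)) \<cdot>\<^sub>v a j)" using WC aC[of j] by simp
    fix t assume "t < dim_vec ((1 / sqrt (lam j)) \<cdot>\<^sub>v a j)"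
    then have t: "t < T" using aC[of j] by simp
    have "col W j $ t = W $$ (t,j)" using WC t j dT' by simp
    also have "\<dots> = Wd $$ (t,j)" using Wd t j by simp
    also have "\<dots> = a j $ t / sqrt (lam j)" unfolding Wd_def using t j by simp
    finally show "col W j $ t = ((1 / sqrt (lam j)) \<cdot>\<^sub>v a j) $ t" using t aC[of j] by simp
  qed
  have WtW': "(\<Sum>t<T. W $$ (t,i) * W $$ (t,j)) = (if i = j then 1 else 0)" if "i < T" "j < T" for i j
  proof -
    have "(W\<^sup>T * W) $$ (i,j) = (\<Sum>t<T. W $$ (t,i) * W $$ (t,j))"
      using that WC by (simp add: scalar_prod_def lessThan_atLeast0)
    thus ?thesis unfolding WtW using that by simp
  qed
  have "Y * W = pad_zero_cols X T"
  proof (rule eq_matI)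
    fix r j assume "r < dim_row (pad_zero_cols X T)" "j < dim_col (pad_zero_cols X T)"
    then have r: "r < n" and j: "j < T" by (simp_all add: pad_zero_cols_def Xdef)
    have wC: "col W j \<in> carrier_vec T" by (metis WC carrier_matD(1) col_dim)
    have YW: "(Y * W) $$ (r,j) = (Y *\<^sub>v col W j) $ r" using Y WC r j by simp
    show "(Y * W) $$ (r,j) = pad_zero_cols X T $$ (r,j)"
    proof (cases "j < d")
      case True
      have "Y *\<^sub>v col W j = (1 / sqrt (lam j)) \<cdot>\<^sub>v (Y *\<^sub>v a j)"
        unfolding colW[OF True] using Y aC[of j] by (simp add: mult_mat_vec)
      also have "Y *\<^sub>v a j = lam j \<cdot>\<^sub>v u j" unfolding a_def YYt[OF uC] eig[of j] using True dn eig by simp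
      finally have "(Y * W) $$ (r,j) = (1 / sqrt (lam j)) * (lam j * U $$ (r,j))"
        unfolding YW using r uC[of j] UC True dn by (simp add: u_def)
      also have "\<dots> = U $$ (r,j) * sqrt \<bar>lam j\<bar>"
      proof -
        have p: "lam j > 0" using pos[OF True] .
        define q where "q = sqrt (lam j)"
        have q: "q > 0" "q * q = lam j" "sqrt \<bar>lam j\<bar> = q" unfolding q_def using p by simp_all
        show ?thesis unfolding q(3) q(2)[symmetric] using q(1) by (simp add: field_simps)
      qed
      also have "\<dots> = pad_zero_cols X T $$ (r,j)" unfolding pad_zero_cols_def Xdef using r j True by simp
      finally show ?thesis .
    next
      case False
      have orth: "u i \<bullet> (Y *\<^sub>v col W j) = 0" if i: "i < n" for i
      proof -
        have "u i \<bullet> (Y *\<^sub>v col W j) = a i \<bullet> col W j" using ua[OF wC] .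
        also have "\<dots> = 0"
        proof (cases "i < d")
          case True
          have "a i \<bullet> col W j = (\<Sum>t<T. a i $ t * W $$ (t,j))"
            using aC[of i] WC j by (simp add: scalar_prod_def lessThan_atLeast0)
          also have "\<dots> = (\<Sum>t<T. sqrt (lam i) * (W $$ (t,i) * W $$ (t,j)))"
          proof (rule sum.cong[OF refl])
            fix t assume "t \<in> {..<T}"
            then have t: "t < T" by simp
            have "W $$ (t,i) = a i $ t / sqrt (lam i)" using Wd t True unfolding Wd_def by simp
            moreover have "sqrt (lam i) > 0" using pos[OF True] by simp
            ultimately have "a i $ t = sqrt (lam i) * W $$ (t,i)" by (simp add: field_simps)
            thus "a i $ t * W $$ (t,j) = sqrt (lam i) * (W $$ (t,i) * W $$ (t,j))" by simp
          qed
          also have "\<dots> = 0" unfolding sum_distrib_left[symmetric] using WtW'[of i j] True False dT' j by simp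
          finally show ?thesis .
        next
          case False
          have "(\<Sum>t<T. a i $ t * a i $ t) = 0" using aa[OF i i] zero[of i] False i sq by simp
          hence "\<forall>t\<in>{..<T}. a i $ t * a i $ t = 0" by (subst (asm) sum_nonneg_eq_0_iff) auto
          hence "a i $ t = 0" if "t < T" for t using that by simp
          thus ?thesis using aC[of i] WC by (simp add: scalar_prod_def)
        qed
        finally show ?thesis .
      qed
      have z1: "U\<^sup>T *\<^sub>v (Y *\<^sub>v col W j) = 0\<^sub>v n"
        by (rule eq_vecI) (use orth UC in \<open>auto simp: u_def\<close>)
      have "Y *\<^sub>v col W j = (U * U\<^sup>T) *\<^sub>v (Y *\<^sub>v col W j)" unfolding UUt using Y wC by simp
      also have "\<dots> = U *\<^sub>v (U\<^sup>T *\<^sub>v (Y *\<^sub>v col W j))" using UC Y wC by (simp add: assoc_mult_mat_vec)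
      also have "\<dots> = 0\<^sub>v n" unfolding z1 using UC by (intro eq_vecI) (auto simp: row_def)
      finally have "(Y * W) $$ (r,j) = 0" unfolding YW using r by simp
      thus ?thesis unfolding pad_zero_cols_def Xdef using r j False by simp
    qed
  qed (use Y WC in \<open>simp_all add: pad_zero_cols_def Xdef\<close>)
  thus ?thesis using WC WtW by blast
qed



theorem mainTheorem3:
  fixes Z :: "real mat" and n T d0 :: nat
  assumes dimZ: "Z \<in> carrier_mat n T"
    and sigma_pos: "\<forall>i<n. sigma2 Z i > 0"
    and fourier_sparse: "card {k. k < T \<and> col (fourier_mat Z) k \<noteq> 0\<^sub>v n} \<le> d0"
  shows "vec_space.rank n (corr_mat Z) \<le> 2 * d0 \<and>
    (\<forall>X. is_ASE (corr_mat Z) (vec_space.rank n (corr_mat Z)) X \<longrightarrow>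
       (\<exists>W \<in> orth_mats T.
          map_mat complex_of_real (pad_zero_cols X T) =
          complex_of_real (1 / sqrt (real T)) \<cdot>\<^sub>m
            (fourier_mat Z * Ksqrt T * map_mat complex_of_real W)))"
proof -
  define Zt where "Zt = Ztilde Z"
  define c :: real where "c = 1 / sqrt (real T)"
  define G where "G = c \<cdot>\<^sub>m hart T"
  define Y where "Y = Zt * G"
  define S where "S = {k. k < T \<and> col (fourier_mat Z) k \<noteq> 0\<^sub>v n}"
  define R where "R = corr_mat Z"
  have ZtC: "Zt \<in> carrier_mat n T" unfolding Zt_def using Ztilde_carrier[OF dimZ] .
  have HC: "hart T \<in> carrier_mat T T" unfolding hart_def by simp
  have GC: "G \<in> carrier_mat T T" unfolding G_def using HC by simp
  have YC: "Y \<in> carrier_mat n T" unfolding Y_def using ZtC GC by simp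
  have FC: "fourier_mat Z \<in> carrier_mat n T" using dimZ unfolding fourier_mat_def by auto
  have Rdef: "R = Zt * Zt\<^sup>T" unfolding R_def corr_mat_def Zt_def ..
  have hsym: "hart T $$ (j,t) = hart T $$ (t,j)" if "j < T" "t < T" for j t
    using that unfolding hart_def by (simp add: mult.commute mult.left_commute)
  have GGt: "G * G\<^sup>T = 1\<^sub>m T"
  proof (rule eq_matI)
    fix j k assume "j < dim_row (1\<^sub>m T :: real mat)" "k < dim_col (1\<^sub>m T :: real mat)"
    then have jk: "j < T" "k < T" by auto
    have "(G * G\<^sup>T) $$ (j,k) = (\<Sum>t<T. (c * hart T $$ (j,t)) * (c * hart T $$ (k,t)))"
      using jk GC unfolding G_def by (simp add: scalar_prod_def lessThan_atLeast0 hart_def)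
    also have "\<dots> = c * c * (\<Sum>t<T. hart T $$ (t,j) * hart T $$ (t,k))"
      unfolding sum_distrib_left
    proof (rule sum.cong[OF refl])
      fix t assume "t \<in> {..<T}"
      then have t: "t < T" by simp
      show "c * hart T $$ (j,t) * (c * hart T $$ (k,t)) = c * c * (hart T $$ (t,j) * hart T $$ (t,k))"
        unfolding hsym[OF jk(1) t] hsym[OF jk(2) t] by (simp add: algebra_simps)
    qed
    also have "\<dots> = c * c * (if j = k then real T else 0)" using hart_orth[OF jk] by simp
    also have "\<dots> = 1\<^sub>m T $$ (j,k)" unfolding c_def using jk by simp
    finally show "(G * G\<^sup>T) $$ (j,k) = 1\<^sub>m T $$ (j,k)" .
  qed (use GC in auto)
  have YYt: "Y * Y\<^sup>T = R"
  proof -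
    have "Y * Y\<^sup>T = Zt * G * (G\<^sup>T * Zt\<^sup>T)" unfolding Y_def using ZtC GC by (simp add: transpose_mult)
    also have "\<dots> = Zt * (G * (G\<^sup>T * Zt\<^sup>T))" using ZtC GC
      by (subst assoc_mult_mat[of Zt n T G T _ n]) auto
    also have "\<dots> = Zt * (G * G\<^sup>T * Zt\<^sup>T)" using ZtC GC
      by (subst assoc_mult_mat[of G T T "G\<^sup>T" T "Zt\<^sup>T" n]) auto
    also have "\<dots> = Zt * (G * G\<^sup>T) * Zt\<^sup>T" using ZtC GC
      by (subst assoc_mult_mat[of Zt n T "G * G\<^sup>T" T "Zt\<^sup>T" n]) auto
    also have "\<dots> = R" unfolding GGt Rdef using ZtC by simp
    finally show ?thesis .
  qed
  have Yent: "Y = c \<cdot>\<^sub>m (Zt * hart T)" unfolding Y_def G_def using ZtC HC by (simp add: mult_smult_distrib)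
  have S: "S \<subseteq> {..<T}" unfolding S_def by auto
  have zero: "Y $$ (i,k) = 0" if "i < n" "k < T" "k \<notin> S" for i k
  proof -
    have "col (fourier_mat Z) k = 0\<^sub>v n" using that unfolding S_def by auto
    hence "col (fourier_mat Z) k $ i = 0" using that by simp
    hence "fourier_mat Z $$ (i,k) = 0" using that FC by simp
    hence "(Zt * hart T) $$ (i,k) = 0" unfolding Zt_def using Zhart_entry[OF dimZ that(1,2)] by simp
    thus ?thesis unfolding Yent using that ZtC HC by simp
  qed
  have rk: "vec_space.rank n R \<le> card S"
    using rank_gram_le[OF YC S zero] YYt by simp
  have cS: "card S \<le> T" using card_mono[OF _ S] by simp
  have cd0: "card S \<le> d0" using fourier_sparse unfolding S_def .
  show ?thesis
  proof (intro conjI allI impI)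
    show "vec_space.rank n (corr_mat Z) \<le> 2 * d0" using rk cd0 unfolding R_def by simp
  next
    fix X assume ase: "is_ASE (corr_mat Z) (vec_space.rank n (corr_mat Z)) X"
    have rT: "vec_space.rank n R \<le> T" using rk cS by simp
    have ase': "is_ASE R (vec_space.rank n R) X" using ase unfolding R_def .
    obtain W where WC: "W \<in> carrier_mat T T" and WtW: "W\<^sup>T * W = 1\<^sub>m T" and YW: "Y * W = pad_zero_cols X T"
      using ase_part[OF YC YYt[symmetric] rT ase'] by blast
    have WO: "W \<in> orth_mats T" unfolding orth_mats_def using WC WtW by simp
    have "fourier_mat Z * Ksqrt T * map_mat complex_of_real W =
          map_mat complex_of_real (Zt * hart T) * map_mat complex_of_real W"
      unfolding Zt_def fourier_Ksqrt[OF dimZ] ..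
    also have "\<dots> = map_mat complex_of_real (Zt * hart T * W)"
      by (rule of_real_hom.mat_hom_mult[symmetric, of _ n T _ T]) (use ZtC HC WC in auto)
    finally have e: "fourier_mat Z * Ksqrt T * map_mat complex_of_real W = map_mat complex_of_real (Zt * hart T * W)" .
    have YW': "Y * W = c \<cdot>\<^sub>m (Zt * hart T * W)" unfolding Yent
      by (rule mult_smult_assoc_mat[of _ n T _ T]) (use ZtC HC WC in auto)
    have "complex_of_real c \<cdot>\<^sub>m (fourier_mat Z * Ksqrt T * map_mat complex_of_real W) =
          map_mat complex_of_real (pad_zero_cols X T)"
      unfolding e YW[symmetric] YW' by (rule eq_matI) auto
    thus "\<exists>W \<in> orth_mats T. map_mat complex_of_real (pad_zero_cols X T) =
          complex_of_real (1 / sqrt (real T)) \<cdot>\<^sub>m (fourier_mat Z * Ksqrt T * map_mat complex_of_real W)"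
      using WO unfolding c_def by (intro bexI[of _ W]) simp_all
  qed
qed


end
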